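(* Let $R$ be a commutative ring and consider morphisms $(f_t,f_h)\colon(L_t,L_h;\lambda_a,\lambda_b)\to(M_t,M_h;\mu_a,\mu_b)$ and $(g_t,g_h)\colon(M_t,M_h;\mu_a,\mu_b)\to(N_t,N_h;\eta_a,\eta_b)$ in $\mathrm{Rep}_R(\varkappa)$ with zero composite, such that the sequences $L_t\xrightarrow{f_t}M_t\xrightarrow{g_t}N_t$ and $L_h\xrightarrow{f_h}M_h\xrightarrow{g_h}N_h$ are exact at the middle term, and such that $f_h$ is injective. If $(L_t,L_h;\lambda_a,\lambda_b)$ and $(N_t,N_h;\eta_a,\eta_b)$ lie in $\mathrm{Rel}_R(\varkappa)$, then so does $(M_t,M_h;\mu_a,\mu_b)$.
   Context: $\mathrm{Rep}_R(\varkappa)$ has objects $(M_t,M_h;\mu_a,\mu_b)$ with $M_t,M_h$ $R$-modules and $\mu_a,\mu_b\in\mathrm{Hom}_R(M_t,M_h)$; morphisms are pairs $(f_t,f_h)$ of $R$-linear maps with $f_h\lambda_c=\mu_cf_t$ for $c=a,b$, composed componentwise. $\mathrm{Rel}_R(\varkappa)$ is the full subcategory of objects with $\ker(\mu_a)\cap\ker(\mu_b)=0$. *)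

theory Defs
  imports "HOL.Modules"
begin

definition rep_obj ::
  "('r::comm_ring_1 \<Rightarrow> 't::ab_group_add \<Rightarrow> 't) \<Rightarrow> ('r \<Rightarrow> 'h::ab_group_add \<Rightarrow> 'h)
   \<Rightarrow> ('t \<Rightarrow> 'h) \<Rightarrow> ('t \<Rightarrow> 'h) \<Rightarrow> bool" where
  "rep_obj st sh mua mub \<longleftrightarrow>
     module st \<and> module sh \<and> module_hom st sh mua \<and> module_hom st sh mub"

definition rep_mor ::
  "('r::comm_ring_1 \<Rightarrow> 'lt::ab_group_add \<Rightarrow> 'lt) \<Rightarrow> ('r \<Rightarrow> 'lh::ab_group_add \<Rightarrow> 'lh)
   \<Rightarrow> ('lt \<Rightarrow> 'lh) \<Rightarrow> ('lt \<Rightarrow> 'lh)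
   \<Rightarrow> ('r \<Rightarrow> 'mt::ab_group_add \<Rightarrow> 'mt) \<Rightarrow> ('r \<Rightarrow> 'mh::ab_group_add \<Rightarrow> 'mh)
   \<Rightarrow> ('mt \<Rightarrow> 'mh) \<Rightarrow> ('mt \<Rightarrow> 'mh)
   \<Rightarrow> ('lt \<Rightarrow> 'mt) \<Rightarrow> ('lh \<Rightarrow> 'mh) \<Rightarrow> bool" where
  "rep_mor slt slh la lb smt smh ma mb ft fh \<longleftrightarrow>
     module_hom slt smt ft \<and> module_hom slh smh fh \<and>
     fh \<circ> la = ma \<circ> ft \<and> fh \<circ> lb = mb \<circ> ft"

definition in_Rel :: "('t::zero \<Rightarrow> 'h::zero) \<Rightarrow> ('t \<Rightarrow> 'h) \<Rightarrow> bool" where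
  "in_Rel mua mub \<longleftrightarrow> {x. mua x = 0} \<inter> {x. mub x = 0} = {0}"

definition exact_at :: "('a \<Rightarrow> 'b::zero) \<Rightarrow> ('b \<Rightarrow> 'c::zero) \<Rightarrow> bool" where
  "exact_at f g \<longleftrightarrow> range f = {y. g y = 0}"

end

theory Submission
  imports Defs
begin

theorem lemma3p4:
  fixes sLt :: "'r::comm_ring_1 \<Rightarrow> 'lt::ab_group_add \<Rightarrow> 'lt"
    and sLh :: "'r \<Rightarrow> 'lh::ab_group_add \<Rightarrow> 'lh"
    and sMt :: "'r \<Rightarrow> 'mt::ab_group_add \<Rightarrow> 'mt"
    and sMh :: "'r \<Rightarrow> 'mh::ab_group_add \<Rightarrow> 'mh"
    and sNt :: "'r \<Rightarrow> 'nt::ab_group_add \<Rightarrow> 'nt"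
    and sNh :: "'r \<Rightarrow> 'nh::ab_group_add \<Rightarrow> 'nh"
    and la lb :: "'lt \<Rightarrow> 'lh" and ma mb :: "'mt \<Rightarrow> 'mh" and na nb :: "'nt \<Rightarrow> 'nh"
    and ft :: "'lt \<Rightarrow> 'mt" and fh :: "'lh \<Rightarrow> 'mh"
    and gt :: "'mt \<Rightarrow> 'nt" and gh :: "'mh \<Rightarrow> 'nh"
  assumes "rep_obj sLt sLh la lb"
    and "rep_obj sMt sMh ma mb"
    and "rep_obj sNt sNh na nb"
    and "rep_mor sLt sLh la lb sMt sMh ma mb ft fh"
    and "rep_mor sMt sMh ma mb sNt sNh na nb gt gh"
    and "gt \<circ> ft = (\<lambda>_. 0)" and "gh \<circ> fh = (\<lambda>_. 0)"
    and "exact_at ft gt" and "exact_at fh gh"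
    and "inj fh"
    and "in_Rel la lb" and "in_Rel na nb"
  shows "in_Rel ma mb"
proof -
  have hma: "module_hom sMt sMh ma" and hmb: "module_hom sMt sMh mb"
    using assms(2) by (auto simp: rep_obj_def)
  have hgh: "module_hom sMh sNh gh" and cga: "gh \<circ> ma = na \<circ> gt" and cgb: "gh \<circ> mb = nb \<circ> gt"
    using assms(5) by (auto simp: rep_mor_def)
  have hfh: "module_hom sLh sMh fh" and hft: "module_hom sLt sMt ft"
    and cfa: "fh \<circ> la = ma \<circ> ft" and cfb: "fh \<circ> lb = mb \<circ> ft"
    using assms(4) by (auto simp: rep_mor_def)
  have z1: "ma 0 = 0" "mb 0 = 0" "gh 0 = 0" "fh 0 = 0" "ft 0 = 0"
    using module_hom.zero[OF hma] module_hom.zero[OF hmb] module_hom.zero[OF hgh]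
      module_hom.zero[OF hfh] module_hom.zero[OF hft] by auto
  have "x = 0" if xa: "ma x = 0" and xb: "mb x = 0" for x
  proof -
    have "na (gt x) = 0" using fun_cong[OF cga, of x] xa z1 by simp
    moreover have "nb (gt x) = 0" using fun_cong[OF cgb, of x] xb z1 by simp
    ultimately have "gt x = 0" using assms(12) unfolding in_Rel_def by blast
    then obtain y where y: "x = ft y" using assms(8) unfolding exact_at_def by auto
    have "fh (la y) = fh 0" using fun_cong[OF cfa, of y] xa y z1 by simp
    hence "la y = 0" using assms(10) by (simp add: inj_eq)
    moreover have "fh (lb y) = fh 0" using fun_cong[OF cfb, of y] xb y z1 by simp
    hence "lb y = 0" using assms(10) by (simp add: inj_eq)
    ultimately have "y = 0" using assms(11) unfolding in_Rel_def by blast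
    thus ?thesis using y z1 by simp
  qed
  thus ?thesis unfolding in_Rel_def using z1 by auto
qed

end
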